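(* Let $m$ be a positive integer and let $D,D'$ be abstract storage devices with $|\mathcal{S}_D|=|\mathcal{S}_{D'}|=m$ and $D\le D'$. Then $i(D)\ge i(D')$.
   Context: An abstract storage device (ASD) is a pair $D=(\mathcal{S}_D,\mathcal{P}_D)$, $\mathcal{S}_D$ a finite set and $\mathcal{P}_D$ a finite family of partitions of $\mathcal{S}_D$. For a partition $\pi$ of $\mathcal{S}'$ and $\phi:\mathcal{S}\to\mathcal{S}'$, $\pi\circ\phi$ is the partition of $\mathcal{S}$ with $x,y$ in the same block iff $\phi(x),\phi(y)$ are in the same block of $\pi$; $\pi\preceq\rho$ means every block of $\pi$ lies in a block of $\rho$; $\wedge$ is the meet of partitions. $D\le D'$ means there exist $\phi:\mathcal{S}_D\to\mathcal{S}_{D'}$, $\alpha:\mathcal{P}_D\to\mathcal{P}_{D'}$ with $\alpha(\pi)\circ\phi\preceq\pi$ for all $\pi\in\mathcal{P}_D$. $D$ is perfect if $\mathrm{id}_{\mathcal{S}_D}=\{\{s\}:s\in\mathcal{S}_D\}\in\mathcal{P}_D$. $D^{(k)}$ has state space $\mathcal{S}_D$ and partition set $\{\pi_1\wedge\cdots\wedge\pi_k:\pi_i\in\mathcal{P}_D\}$. The perfectness index $i(D)$ is the least integer $k\ge1$ with $D^{(k)}$ perfect, and $i(D)=\infty$ if none exists. *)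

theory Defs
  imports "HOL-Library.Disjoint_Sets" "HOL-Library.Extended_Nat"
begin

text \<open>An abstract storage device: a state space together with a family of partitions
  of it (each partition is a set of blocks).\<close>
type_synonym 'a asd = "'a set \<times> 'a set set set"

definition states :: "'a asd \<Rightarrow> 'a set" where "states D = fst D"
definition parts :: "'a asd \<Rightarrow> 'a set set set" where "parts D = snd D"

definition is_asd :: "'a asd \<Rightarrow> bool" where
  "is_asd D \<longleftrightarrow> finite (states D) \<and> finite (parts D) \<and>
     (\<forall>\<pi>\<in>parts D. partition_on (states D) \<pi>)"

definition pullback :: "'a set \<Rightarrow> 'b set set \<Rightarrow> ('a \<Rightarrow> 'b) \<Rightarrow> 'a set set" where
  "pullback S \<pi> \<phi> = (\<lambda>x. {y\<in>S. \<exists>B\<in>\<pi>. \<phi> x \<in> B \<and> \<phi> y \<in> B}) ` S"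

definition refines :: "'a set set \<Rightarrow> 'a set set \<Rightarrow> bool" where
  "refines \<pi> \<rho> \<longleftrightarrow> (\<forall>B\<in>\<pi>. \<exists>C\<in>\<rho>. B \<subseteq> C)"

definition asd_le :: "'a asd \<Rightarrow> 'b asd \<Rightarrow> bool" where
  "asd_le D D' \<longleftrightarrow> (\<exists>\<phi> \<alpha>. \<phi> ` states D \<subseteq> states D' \<and> (\<forall>\<pi>\<in>parts D. \<alpha> \<pi> \<in> parts D') \<and>
      (\<forall>\<pi>\<in>parts D. refines (pullback (states D) (\<alpha> \<pi>) \<phi>) \<pi>))"

definition perfect :: "'a asd \<Rightarrow> bool" where
  "perfect D \<longleftrightarrow> {{s} | s. s \<in> states D} \<in> parts D"

definition meet :: "'a set set \<Rightarrow> 'a set set \<Rightarrow> 'a set set" where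
  "meet \<pi> \<rho> = {B \<inter> C | B C. B \<in> \<pi> \<and> C \<in> \<rho> \<and> B \<inter> C \<noteq> {}}"

text \<open>kmeets P k: all meets of k partitions from P (k \<ge> 1); kmeets P 0 is unused.\<close>
fun kmeets :: "'a set set set \<Rightarrow> nat \<Rightarrow> 'a set set set" where
  "kmeets P 0 = {}"
| "kmeets P (Suc 0) = P"
| "kmeets P (Suc (Suc k)) = {meet \<pi> \<rho> | \<pi> \<rho>. \<pi> \<in> P \<and> \<rho> \<in> kmeets P (Suc k)}"

definition asd_power :: "'a asd \<Rightarrow> nat \<Rightarrow> 'a asd" where
  "asd_power D k = (states D, kmeets (parts D) k)"

definition perf_index :: "'a asd \<Rightarrow> enat" where
  "perf_index D = (if \<exists>k\<ge>1. perfect (asd_power D k)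
      then enat (LEAST k. k \<ge> 1 \<and> perfect (asd_power D k)) else \<infinity>)"

end

theory Submission
  imports Defs
begin

definition same :: "'a set set \<Rightarrow> 'a \<Rightarrow> 'a \<Rightarrow> bool" where
  "same \<pi> x y \<longleftrightarrow> (\<exists>B\<in>\<pi>. x \<in> B \<and> y \<in> B)"

lemma same_meet: "same (meet \<pi> \<rho>) x y \<longleftrightarrow> same \<pi> x y \<and> same \<rho> x y"
  unfolding same_def meet_def by blast

lemma partition_meet:
  assumes "partition_on S \<pi>" "partition_on S \<rho>"
  shows "partition_on S (meet \<pi> \<rho>)"
proof (rule partition_onI)
  show "\<Union> (meet \<pi> \<rho>) = S"
  proof
    show "\<Union> (meet \<pi> \<rho>) \<subseteq> S" using partition_onD1[OF assms(1)] unfolding meet_def by blast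
    show "S \<subseteq> \<Union> (meet \<pi> \<rho>)"
    proof
      fix x assume "x \<in> S"
      then obtain B C where "B \<in> \<pi>" "C \<in> \<rho>" "x \<in> B" "x \<in> C"
        using partition_onD1[OF assms(1)] partition_onD1[OF assms(2)] by blast
      then show "x \<in> \<Union> (meet \<pi> \<rho>)" unfolding meet_def by blast
    qed
  qed
next
  fix p q assume "p \<in> meet \<pi> \<rho>" "q \<in> meet \<pi> \<rho>" "p \<noteq> q"
  then obtain B C B' C' where b: "p = B \<inter> C" "q = B' \<inter> C'" "B \<in> \<pi>" "C \<in> \<rho>" "B' \<in> \<pi>" "C' \<in> \<rho>"
    unfolding meet_def by blast
  show "disjnt p q"
  proof (rule ccontr)
    assume "\<not> disjnt p q"
    then obtain z where "z \<in> p" "z \<in> q" by (auto simp: disjnt_def)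
    have d1: "disjoint \<pi>" "disjoint \<rho>" using assms partition_onD2 by blast+
    have "B = B'" using d1(1) b \<open>z \<in> p\<close> \<open>z \<in> q\<close> unfolding pairwise_def disjnt_def by blast
    moreover have "C = C'" using d1(2) b \<open>z \<in> p\<close> \<open>z \<in> q\<close> unfolding pairwise_def disjnt_def by blast
    ultimately show False using b \<open>p \<noteq> q\<close> by simp
  qed
next
  show "{} \<notin> meet \<pi> \<rho>" unfolding meet_def by blast
qed

lemma kmeets_partition:
  assumes "\<forall>\<pi>\<in>P. partition_on S \<pi>"
  shows "\<sigma> \<in> kmeets P (Suc k) \<Longrightarrow> partition_on S \<sigma>"
proof (induction k arbitrary: \<sigma>)
  case 0 then show ?case using assms by simp
next
  case (Suc k)
  then obtain \<pi> \<rho> where "\<sigma> = meet \<pi> \<rho>" "\<pi> \<in> P" "\<rho> \<in> kmeets P (Suc k)" by auto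
  then show ?case using Suc.IH assms partition_meet by blast
qed

lemma refines_same:
  assumes "refines (pullback S \<rho> \<phi>) \<pi>" "x \<in> S" "y \<in> S" "same \<rho> (\<phi> x) (\<phi> y)"
  shows "same \<pi> x y"
proof -
  let ?B = "{z\<in>S. \<exists>B\<in>\<rho>. \<phi> x \<in> B \<and> \<phi> z \<in> B}"
  have "?B \<in> pullback S \<rho> \<phi>" using assms(2) unfolding pullback_def by blast
  then obtain C where "C \<in> \<pi>" "?B \<subseteq> C" using assms(1) unfolding refines_def by blast
  moreover have "x \<in> ?B" "y \<in> ?B" using assms(2-4) unfolding same_def by auto
  ultimately show ?thesis unfolding same_def by blast
qed

lemma transfer_kmeets:
  assumes phi: "\<forall>\<pi>\<in>P. \<alpha> \<pi> \<in> P' \<and> refines (pullback S (\<alpha> \<pi>) \<phi>) \<pi>"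
  shows "\<sigma> \<in> kmeets P (Suc k) \<Longrightarrow> \<exists>\<sigma>'\<in>kmeets P' (Suc k).
     \<forall>x\<in>S. \<forall>y\<in>S. same \<sigma>' (\<phi> x) (\<phi> y) \<longrightarrow> same \<sigma> x y"
proof (induction k arbitrary: \<sigma>)
  case 0
  then show ?case using phi refines_same by fastforce
next
  case (Suc k)
  then obtain \<pi> \<rho> where s: "\<sigma> = meet \<pi> \<rho>" "\<pi> \<in> P" "\<rho> \<in> kmeets P (Suc k)" by auto
  then obtain \<rho>' where r: "\<rho>' \<in> kmeets P' (Suc k)"
      "\<forall>x\<in>S. \<forall>y\<in>S. same \<rho>' (\<phi> x) (\<phi> y) \<longrightarrow> same \<rho> x y" using Suc.IH by blast
  have "meet (\<alpha> \<pi>) \<rho>' \<in> kmeets P' (Suc (Suc k))" using r(1) phi s(2) by auto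
  moreover have "\<forall>x\<in>S. \<forall>y\<in>S. same (meet (\<alpha> \<pi>) \<rho>') (\<phi> x) (\<phi> y) \<longrightarrow> same \<sigma> x y"
  proof (intro ballI impI)
    fix x y assume xy: "x \<in> S" "y \<in> S" "same (meet (\<alpha> \<pi>) \<rho>') (\<phi> x) (\<phi> y)"
    then have a: "same (\<alpha> \<pi>) (\<phi> x) (\<phi> y)" and b: "same \<rho>' (\<phi> x) (\<phi> y)"
      by (simp_all add: same_meet)
    have "same \<pi> x y" using refines_same[OF _ xy(1,2) a] phi s(2) by blast
    moreover have "same \<rho> x y" using r(2) xy(1,2) b by blast
    ultimately show "same \<sigma> x y" using s(1) by (simp add: same_meet)
  qed
  ultimately show ?case by blast
qed

lemma perfect_transfer:
  assumes "is_asd D" "is_asd D'" "card (states D) = card (states D')" "asd_le D D'"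
    and "k \<ge> 1" "perfect (asd_power D k)"
  shows "perfect (asd_power D' k)"
proof -
  obtain k0 where k: "k = Suc k0" using assms(5) by (cases k) auto
  let ?S = "states D" and ?S' = "states D'"
  obtain \<phi> \<alpha> where ph: "\<phi> ` ?S \<subseteq> ?S'" "\<forall>\<pi>\<in>parts D. \<alpha> \<pi> \<in> parts D'"
      "\<forall>\<pi>\<in>parts D. refines (pullback ?S (\<alpha> \<pi>) \<phi>) \<pi>"
    using assms(4) unfolding asd_le_def by blast
  let ?I = "{{s} | s. s \<in> ?S}"
  have I: "?I \<in> kmeets (parts D) (Suc k0)" using assms(6) k
    unfolding perfect_def asd_power_def states_def parts_def by simp
  obtain \<sigma>' where s: "\<sigma>' \<in> kmeets (parts D') (Suc k0)"
      "\<forall>x\<in>?S. \<forall>y\<in>?S. same \<sigma>' (\<phi> x) (\<phi> y) \<longrightarrow> same ?I x y"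
  proof -
    have "\<forall>\<pi>\<in>parts D. \<alpha> \<pi> \<in> parts D' \<and> refines (pullback ?S (\<alpha> \<pi>) \<phi>) \<pi>" using ph by blast
    from transfer_kmeets[OF this I] that show ?thesis by blast
  qed
  have part: "partition_on ?S' \<sigma>'"
    using kmeets_partition[OF _ s(1)] assms(2) unfolding is_asd_def by blast
  have sameI: "same ?I x y \<Longrightarrow> x = y" for x y unfolding same_def by auto
  have refl': "u \<in> ?S' \<Longrightarrow> same \<sigma>' u u" for u
    using partition_onD1[OF part] unfolding same_def by blast
  have inj: "inj_on \<phi> ?S"
  proof (rule inj_onI)
    fix x y assume xy: "x \<in> ?S" "y \<in> ?S" "\<phi> x = \<phi> y"
    have "\<phi> x \<in> ?S'" using ph(1) xy(1) by blast
    then have "same \<sigma>' (\<phi> x) (\<phi> y)" using refl' xy(3) by simp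
    then have "same ?I x y" using s(2) xy(1,2) by blast
    then show "x = y" by (rule sameI)
  qed
  have fin: "finite ?S'" using assms(2) unfolding is_asd_def by blast
  have img: "\<phi> ` ?S = ?S'"
    using card_subset_eq[OF fin ph(1)] card_image[OF inj] assms(3) by simp
  have "\<sigma>' = {{s} | s. s \<in> ?S'}"
  proof
    show "\<sigma>' \<subseteq> {{s} | s. s \<in> ?S'}"
    proof
      fix B assume B: "B \<in> \<sigma>'"
      have ne: "B \<noteq> {}" using partition_onD3[OF part] B by blast
      have sub: "B \<subseteq> ?S'" using partition_onD1[OF part] B by blast
      have eq: "u = v" if uv: "u \<in> B" "v \<in> B" for u v
      proof -
        obtain x y where "x \<in> ?S" "y \<in> ?S" "u = \<phi> x" "v = \<phi> y"
          using uv sub img by blast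
        moreover have "same \<sigma>' u v" using uv B unfolding same_def by blast
        ultimately show ?thesis using s(2) sameI by blast
      qed
      obtain u where "u \<in> B" using ne by blast
      then have "B = {u}" using eq by blast
      then show "B \<in> {{s} | s. s \<in> ?S'}" using sub \<open>u \<in> B\<close> by blast
    qed
  next
    show "{{s} | s. s \<in> ?S'} \<subseteq> \<sigma>'"
    proof
      fix X assume "X \<in> {{s} | s. s \<in> ?S'}"
      then obtain u where u: "X = {u}" "u \<in> ?S'" by blast
      then obtain B where B: "B \<in> \<sigma>'" "u \<in> B" using partition_onD1[OF part] by blast
      have "B \<subseteq> ?S'" using partition_onD1[OF part] B by blast
      have "\<forall>v\<in>B. v = u"
      proof
        fix v assume "v \<in> B"
        obtain x y where "x \<in> ?S" "y \<in> ?S" "u = \<phi> x" "v = \<phi> y"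
          using \<open>v \<in> B\<close> B \<open>B \<subseteq> ?S'\<close> img by blast
        moreover have "same \<sigma>' u v" using \<open>v \<in> B\<close> B unfolding same_def by blast
        ultimately show "v = u" using s(2) sameI by blast
      qed
      then have "B = {u}" using B by blast
      then show "X \<in> \<sigma>'" using u B by simp
    qed
  qed
  then have "{{s} | s. s \<in> ?S'} \<in> kmeets (parts D') k" using s(1) k by simp
  then show ?thesis unfolding perfect_def asd_power_def states_def parts_def by simp
qed

theorem proposition4:
  fixes D :: "'a asd" and D' :: "'b asd" and m :: nat
  assumes "m > 0"
    and "is_asd D" and "is_asd D'"
    and "card (states D) = m" and "card (states D') = m"
    and "asd_le D D'"
  shows "perf_index D \<ge> perf_index D'"
proof (cases "\<exists>k\<ge>1. perfect (asd_power D k)")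
  case False
  then have "perf_index D = \<infinity>" unfolding perf_index_def by auto
  then show ?thesis by simp
next
  case True
  define k where "k = (LEAST k. k \<ge> 1 \<and> perfect (asd_power D k))"
  have kk: "k \<ge> 1 \<and> perfect (asd_power D k)" unfolding k_def
    using True by (metis (mono_tags, lifting) LeastI)
  have p': "perfect (asd_power D' k)"
    using perfect_transfer[OF assms(2,3) _ assms(6)] kk assms(4,5) by simp
  then have ex': "\<exists>k\<ge>1. perfect (asd_power D' k)" using kk by blast
  have "(LEAST k. k \<ge> 1 \<and> perfect (asd_power D' k)) \<le> k"
    using kk p' by (simp add: Least_le)
  then show ?thesis unfolding perf_index_def using True ex' k_def by simp
qed

end
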